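(* Let $P\in\mathcal{M}_1$. For every $X\in L^\infty(P)$ we have $\rho^P(X)\ge\widetilde\rho^P(X)=\widehat\rho^P(X)$, and consequently $C^P\subseteq\widehat C^P$.
   Context: $(\Omega,\mathcal{F})$ is a measurable space, $\mathcal{M}_1$ the set of probability measures on it, $\mathcal{X}$ the space of bounded $\mathcal{F}$-measurable real functions on $\Omega$ (bounded pointwise). For $P\in\mathcal{M}_1$, $L^\infty(P)=L^\infty(\Omega,\mathcal{F},P)$ and $\mathcal{P}^P=\{Q\in\mathcal{M}_1:Q\ll P\}$. Fix a penalty function $\alpha:\mathcal{M}_1\to\mathbb{R}\cup\{+\infty\}$ such that $\rho(X):=\sup_{Q\in\mathcal{M}_1}\{\mathbb{E}_Q[-X]-\alpha(Q)\}$ is real-valued for all $X\in\mathcal{X}$. For $X\in L^\infty(P)$ define $\rho^P(X)=\inf_{\{\widetilde X\in\mathcal{X}:P(\widetilde X=X)=1\}}\rho(\widetilde X)$, $\widehat\rho^P(X)=\sup_{Q\in\mathcal{P}^P}\{\mathbb{E}_Q[-X]-\alpha(Q)\}$, and $\widetilde\rho^P(X)=\sup_{Q\in\mathcal{M}_1}\inf_{\{\widetilde X\in\mathcal{X}:P(\widetilde X=X)=1\}}\{\mathbb{E}_Q[-\widetilde X]-\alpha(Q)\}$. Acceptance sets: $C^P=\{X\in L^\infty(P):\rho^P(X)\le0\}$, $\widehat C^P=\{X\in L^\infty(P):\widehat\rho^P(X)\le0\}$. *)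

theory Defs
  imports "HOL-Probability.Probability"
begin

text \<open>The measurable space (Omega, F) is represented by a measure M; only space M and sets M matter.\<close>

definition M1 :: "'a measure \<Rightarrow> 'a measure set" where
  "M1 M = {Q. prob_space Q \<and> sets Q = sets M}"

definition bdd_meas :: "'a measure \<Rightarrow> ('a \<Rightarrow> real) set" where
  "bdd_meas M = {X. X \<in> borel_measurable M \<and> (\<exists>C. \<forall>\<omega>\<in>space M. \<bar>X \<omega>\<bar> \<le> C)}"

text \<open>Representatives of elements of L-infinity(P): measurable, P-essentially bounded.\<close>
definition Linf :: "'a measure \<Rightarrow> ('a \<Rightarrow> real) set" where
  "Linf P = {X. X \<in> borel_measurable P \<and> (\<exists>C. AE \<omega> in P. \<bar>X \<omega>\<bar> \<le> C)}"

definition absc_set :: "'a measure \<Rightarrow> 'a measure \<Rightarrow> 'a measure set" where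
  "absc_set M P = {Q \<in> M1 M. absolutely_continuous P Q}"

definition rho :: "'a measure \<Rightarrow> ('a measure \<Rightarrow> ereal) \<Rightarrow> ('a \<Rightarrow> real) \<Rightarrow> ereal" where
  "rho M \<alpha> X = (SUP Q\<in>M1 M. ereal (integral\<^sup>L Q (\<lambda>\<omega>. - X \<omega>)) - \<alpha> Q)"

definition versions :: "'a measure \<Rightarrow> 'a measure \<Rightarrow> ('a \<Rightarrow> real) \<Rightarrow> ('a \<Rightarrow> real) set" where
  "versions M P X = {Y \<in> bdd_meas M. AE \<omega> in P. Y \<omega> = X \<omega>}"

definition rhoP :: "'a measure \<Rightarrow> ('a measure \<Rightarrow> ereal) \<Rightarrow> 'a measure \<Rightarrow> ('a \<Rightarrow> real) \<Rightarrow> ereal" where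
  "rhoP M \<alpha> P X = (INF Y\<in>versions M P X. rho M \<alpha> Y)"

definition rho_hat :: "'a measure \<Rightarrow> ('a measure \<Rightarrow> ereal) \<Rightarrow> 'a measure \<Rightarrow> ('a \<Rightarrow> real) \<Rightarrow> ereal" where
  "rho_hat M \<alpha> P X = (SUP Q\<in>absc_set M P. ereal (integral\<^sup>L Q (\<lambda>\<omega>. - X \<omega>)) - \<alpha> Q)"

definition rho_tilde :: "'a measure \<Rightarrow> ('a measure \<Rightarrow> ereal) \<Rightarrow> 'a measure \<Rightarrow> ('a \<Rightarrow> real) \<Rightarrow> ereal" where
  "rho_tilde M \<alpha> P X = (SUP Q\<in>M1 M. INF Y\<in>versions M P X.
      ereal (integral\<^sup>L Q (\<lambda>\<omega>. - Y \<omega>)) - \<alpha> Q)"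

definition accP :: "'a measure \<Rightarrow> ('a measure \<Rightarrow> ereal) \<Rightarrow> 'a measure \<Rightarrow> ('a \<Rightarrow> real) set" where
  "accP M \<alpha> P = {X \<in> Linf P. rhoP M \<alpha> P X \<le> 0}"

definition acc_hat :: "'a measure \<Rightarrow> ('a measure \<Rightarrow> ereal) \<Rightarrow> 'a measure \<Rightarrow> ('a \<Rightarrow> real) set" where
  "acc_hat M \<alpha> P = {X \<in> Linf P. rho_hat M \<alpha> P X \<le> 0}"

end

theory Submission
  imports Defs
begin

lemma meas_transfer:
  assumes "sets Q = sets M" "X \<in> borel_measurable M"
  shows "X \<in> borel_measurable Q"
  using assms measurable_cong_sets[OF assms(1) refl] by simp

lemma versions_nonempty:
  assumes P: "P \<in> M1 M" and X: "X \<in> Linf P"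
  shows "versions M P X \<noteq> {}"
proof -
  have sP: "sets P = sets M" using P by (simp add: M1_def)
  from X obtain C where Xm: "X \<in> borel_measurable P" and C: "AE \<omega> in P. \<bar>X \<omega>\<bar> \<le> C"
    by (auto simp: Linf_def)
  have XM: "X \<in> borel_measurable M" using meas_transfer[OF sP[symmetric] Xm] .
  define Y where "Y = (\<lambda>\<omega>. if \<bar>X \<omega>\<bar> \<le> C then X \<omega> else 0)"
  have "Y \<in> borel_measurable M" unfolding Y_def using XM by measurable
  moreover have "\<forall>\<omega>\<in>space M. \<bar>Y \<omega>\<bar> \<le> \<bar>C\<bar>" by (auto simp: Y_def)
  moreover have "AE \<omega> in P. Y \<omega> = X \<omega>" using C by eventually_elim (auto simp: Y_def)
  ultimately have "Y \<in> versions M P X" by (auto simp: versions_def bdd_meas_def)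
  then show ?thesis by blast
qed

lemma integrable_bdd:
  assumes Q: "Q \<in> M1 M" and Y: "Y \<in> bdd_meas M"
  shows "integrable Q Y"
proof -
  have sQ: "sets Q = sets M" and pQ: "prob_space Q" using Q by (auto simp: M1_def)
  from Y obtain C where Ym: "Y \<in> borel_measurable M" and C: "\<forall>\<omega>\<in>space M. \<bar>Y \<omega>\<bar> \<le> C"
    by (auto simp: bdd_meas_def)
  have sp: "space Q = space M" using sets_eq_imp_space_eq[OF sQ] .
  have ae: "AE \<omega> in Q. norm (Y \<omega>) \<le> C"
    by (rule AE_I2) (use C sp in simp)
  show ?thesis
    by (rule finite_measure.integrable_const_bound[OF prob_space.finite_measure[OF pQ] ae meas_transfer[OF sQ Ym]])
qed

lemma abs_case:
  assumes P: "P \<in> M1 M" and X: "X \<in> Linf P" and Q: "Q \<in> absc_set M P"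
    and Y: "Y \<in> versions M P X"
  shows "integral\<^sup>L Q (\<lambda>\<omega>. - Y \<omega>) = integral\<^sup>L Q (\<lambda>\<omega>. - X \<omega>)"
proof -
  have sP: "sets P = sets M" using P by (simp add: M1_def)
  have QM: "Q \<in> M1 M" and ac: "absolutely_continuous P Q" using Q by (simp_all add: absc_set_def)
  have sQ: "sets Q = sets M" using QM by (simp add: M1_def)
  have XP: "X \<in> borel_measurable P" using X by (simp add: Linf_def)
  have sQP': "sets Q = sets P" using sQ sP by simp
  have Xm: "X \<in> borel_measurable Q" by (rule meas_transfer[OF sQP' XP])
  have YM: "Y \<in> borel_measurable M" using Y by (simp add: versions_def bdd_meas_def)
  have Ym: "Y \<in> borel_measurable Q" by (rule meas_transfer[OF sQ YM])
  have ae: "AE \<omega> in P. Y \<omega> = X \<omega>" using Y by (simp add: versions_def)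
  have sQP: "sets Q = sets P" using sQ sP by simp
  have "AE \<omega> in Q. Y \<omega> = X \<omega>" by (rule absolutely_continuous_AE[OF sQP ac ae])
  then have ae2: "AE \<omega> in Q. - Y \<omega> = - X \<omega>" by (rule AE_mp) (rule AE_I2, simp)
  show ?thesis
    by (rule integral_cong_AE) (use Xm Ym ae2 in auto)
qed

lemma nonabs_case:
  assumes alpha_range: "\<forall>Q\<in>M1 M. \<alpha> Q \<noteq> -\<infinity>"
    and P: "P \<in> M1 M" and X: "X \<in> Linf P" and Q: "Q \<in> M1 M" and nQ: "Q \<notin> absc_set M P"
  shows "(INF Y\<in>versions M P X. ereal (integral\<^sup>L Q (\<lambda>\<omega>. - Y \<omega>)) - \<alpha> Q) = -\<infinity>"
proof -
  have sP: "sets P = sets M" using P by (simp add: M1_def)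
  have sQ: "sets Q = sets M" and pQ: "prob_space Q" using Q by (simp_all add: M1_def)
  obtain Y0 where Y0: "Y0 \<in> versions M P X" using versions_nonempty[OF P X] by blast
  show ?thesis
  proof (cases "\<alpha> Q = \<infinity>")
    case True
    have "(INF Y\<in>versions M P X. ereal (integral\<^sup>L Q (\<lambda>\<omega>. - Y \<omega>)) - \<alpha> Q)
       \<le> ereal (integral\<^sup>L Q (\<lambda>\<omega>. - Y0 \<omega>)) - \<alpha> Q" using Y0 by (rule INF_lower)
    also have "\<dots> = -\<infinity>" using True by simp
    finally show ?thesis by simp
  next
    case False
    with alpha_range Q obtain a where a: "\<alpha> Q = ereal a" by (cases "\<alpha> Q") auto
    from nQ Q have "\<not> absolutely_continuous P Q" by (simp add: absc_set_def)
    then obtain A where A: "A \<in> null_sets P" "A \<notin> null_sets Q"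
      unfolding absolutely_continuous_def by blast
    have AP: "A \<in> sets P" using A(1) by (rule null_setsD2)
    have AM: "A \<in> sets M" using AP sP by simp
    have AQ: "A \<in> sets Q" using AM sQ by simp
    have m: "measure Q A > 0"
    proof -
      have "emeasure Q A \<noteq> 0" using A(2) AQ by (simp add: null_sets_def)
      moreover have "emeasure Q A = ennreal (measure Q A)"
        using finite_measure.emeasure_eq_measure[OF prob_space.finite_measure[OF pQ]] by blast
      ultimately show ?thesis using measure_nonneg[of Q A]
        by (metis ennreal_0 less_eq_real_def)
    qed
    from Y0 obtain C where Y0m: "Y0 \<in> borel_measurable M" and C: "\<forall>\<omega>\<in>space M. \<bar>Y0 \<omega>\<bar> \<le> C"
      and Y0ae: "AE \<omega> in P. Y0 \<omega> = X \<omega>"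
      by (auto simp: versions_def bdd_meas_def)
    define c where "c = integral\<^sup>L Q (\<lambda>\<omega>. - Y0 \<omega>)"
    have key: "(INF Y\<in>versions M P X. ereal (integral\<^sup>L Q (\<lambda>\<omega>. - Y \<omega>)) - \<alpha> Q)
               \<le> ereal (c - real n * measure Q A - a)" for n :: nat
    proof -
      define Yn where "Yn = (\<lambda>\<omega>. Y0 \<omega> + real n * indicator A \<omega>)"
      have "Yn \<in> borel_measurable M" unfolding Yn_def using Y0m AM by measurable
      moreover have "\<forall>\<omega>\<in>space M. \<bar>Yn \<omega>\<bar> \<le> C + real n"
      proof
        fix \<omega> assume "\<omega> \<in> space M"
        then have "\<bar>Y0 \<omega>\<bar> \<le> C" using C by auto
        moreover have "\<bar>real n * indicator A \<omega>\<bar> \<le> real n" by (auto simp: indicator_def)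
        ultimately show "\<bar>Yn \<omega>\<bar> \<le> C + real n" unfolding Yn_def by linarith
      qed
      moreover have "AE \<omega> in P. Yn \<omega> = X \<omega>"
        using Y0ae AE_not_in[OF A(1)] by eventually_elim (auto simp: Yn_def)
      ultimately have Yv: "Yn \<in> versions M P X" by (auto simp: versions_def bdd_meas_def)
      have i0: "integrable Q Y0" using integrable_bdd[OF Q] Y0 by (auto simp: versions_def)
      have i1: "integrable Q (indicator A :: 'a \<Rightarrow> real)"
        by (rule integrable_real_indicator[OF AQ]) (use finite_measure.emeasure_finite[OF prob_space.finite_measure[OF pQ], of A] in \<open>simp add: top.not_eq_extremum\<close>)
      have "integral\<^sup>L Q (\<lambda>\<omega>. - Yn \<omega>) = c - real n * measure Q A"
        unfolding Yn_def c_def using i0 i1 sets.Int_space_eq2[OF AQ] by (simp add: Bochner_Integration.integral_add)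
      then have "(INF Y\<in>versions M P X. ereal (integral\<^sup>L Q (\<lambda>\<omega>. - Y \<omega>)) - \<alpha> Q)
          \<le> ereal (c - real n * measure Q A) - ereal a"
        using INF_lower[OF Yv, of "\<lambda>Y. ereal (integral\<^sup>L Q (\<lambda>\<omega>. - Y \<omega>)) - \<alpha> Q"] a by simp
      then show ?thesis by simp
    qed
    show ?thesis
    proof (rule ereal_bot)
      fix B
      obtain n :: nat where n: "(c - a - B) / measure Q A < real n" using reals_Archimedean2 by blast
      then have "c - a - B < real n * measure Q A" using m by (simp add: field_simps)
      then have "c - real n * measure Q A - a \<le> B" by linarith
      then show "(INF Y\<in>versions M P X. ereal (integral\<^sup>L Q (\<lambda>\<omega>. - Y \<omega>)) - \<alpha> Q) \<le> ereal B"
        using key[of n] by (meson ereal_less_eq(3) order_trans)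
    qed
  qed
qed

theorem lemma3p5:
  fixes M :: "'a measure" and \<alpha> :: "'a measure \<Rightarrow> ereal" and P :: "'a measure"
  assumes alpha_range: "\<forall>Q\<in>M1 M. \<alpha> Q \<noteq> -\<infinity>"
    and rho_real: "\<forall>X\<in>bdd_meas M. \<bar>rho M \<alpha> X\<bar> \<noteq> \<infinity>"
    and P: "P \<in> M1 M"
  shows "(\<forall>X\<in>Linf P. rhoP M \<alpha> P X \<ge> rho_tilde M \<alpha> P X \<and>
                      rho_tilde M \<alpha> P X = rho_hat M \<alpha> P X)
         \<and> accP M \<alpha> P \<subseteq> acc_hat M \<alpha> P"
proof -
  have main: "rhoP M \<alpha> P X \<ge> rho_tilde M \<alpha> P X \<and> rho_tilde M \<alpha> P X = rho_hat M \<alpha> P X"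
    if X: "X \<in> Linf P" for X
  proof
    show "rhoP M \<alpha> P X \<ge> rho_tilde M \<alpha> P X"
      unfolding rhoP_def rho_tilde_def rho_def
    proof (rule SUP_least, rule INF_greatest)
      fix Q Y assume "Q \<in> M1 M" "Y \<in> versions M P X"
      then show "(INF Y\<in>versions M P X. ereal (integral\<^sup>L Q (\<lambda>\<omega>. - Y \<omega>)) - \<alpha> Q)
          \<le> (SUP Q\<in>M1 M. ereal (integral\<^sup>L Q (\<lambda>\<omega>. - Y \<omega>)) - \<alpha> Q)"
        by (meson INF_lower SUP_upper order_trans)
    qed
    have eqabs: "(INF Y\<in>versions M P X. ereal (integral\<^sup>L Q (\<lambda>\<omega>. - Y \<omega>)) - \<alpha> Q)
        = ereal (integral\<^sup>L Q (\<lambda>\<omega>. - X \<omega>)) - \<alpha> Q" if Q: "Q \<in> absc_set M P" for Q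
    proof -
      have "(INF Y\<in>versions M P X. ereal (integral\<^sup>L Q (\<lambda>\<omega>. - Y \<omega>)) - \<alpha> Q)
          = (INF Y\<in>versions M P X. ereal (integral\<^sup>L Q (\<lambda>\<omega>. - X \<omega>)) - \<alpha> Q)"
        using abs_case[OF P X Q] by (intro INF_cong) auto
      also have "\<dots> = ereal (integral\<^sup>L Q (\<lambda>\<omega>. - X \<omega>)) - \<alpha> Q"
        using versions_nonempty[OF P X] by simp
      finally show ?thesis .
    qed
    have sub: "absc_set M P \<subseteq> M1 M" by (auto simp: absc_set_def)
    show "rho_tilde M \<alpha> P X = rho_hat M \<alpha> P X"
      unfolding rho_tilde_def rho_hat_def
    proof (rule antisym)
      show "(SUP Q\<in>M1 M. INF Y\<in>versions M P X. ereal (integral\<^sup>L Q (\<lambda>\<omega>. - Y \<omega>)) - \<alpha> Q)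
          \<le> (SUP Q\<in>absc_set M P. ereal (integral\<^sup>L Q (\<lambda>\<omega>. - X \<omega>)) - \<alpha> Q)"
      proof (rule SUP_least)
        fix Q assume Q: "Q \<in> M1 M"
        show "(INF Y\<in>versions M P X. ereal (integral\<^sup>L Q (\<lambda>\<omega>. - Y \<omega>)) - \<alpha> Q)
          \<le> (SUP Q\<in>absc_set M P. ereal (integral\<^sup>L Q (\<lambda>\<omega>. - X \<omega>)) - \<alpha> Q)"
        proof (cases "Q \<in> absc_set M P")
          case True
          have "ereal (integral\<^sup>L Q (\<lambda>\<omega>. - X \<omega>)) - \<alpha> Q
              \<le> (SUP Q\<in>absc_set M P. ereal (integral\<^sup>L Q (\<lambda>\<omega>. - X \<omega>)) - \<alpha> Q)"
            using True by (rule SUP_upper)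
          then show ?thesis using eqabs[OF True] by simp
        next
          case False
          then show ?thesis using nonabs_case[OF alpha_range P X Q False] by simp
        qed
      qed
      show "(SUP Q\<in>absc_set M P. ereal (integral\<^sup>L Q (\<lambda>\<omega>. - X \<omega>)) - \<alpha> Q)
          \<le> (SUP Q\<in>M1 M. INF Y\<in>versions M P X. ereal (integral\<^sup>L Q (\<lambda>\<omega>. - Y \<omega>)) - \<alpha> Q)"
      proof (rule SUP_least)
        fix Q assume Q: "Q \<in> absc_set M P"
        then show "ereal (integral\<^sup>L Q (\<lambda>\<omega>. - X \<omega>)) - \<alpha> Q
          \<le> (SUP Q\<in>M1 M. INF Y\<in>versions M P X. ereal (integral\<^sup>L Q (\<lambda>\<omega>. - Y \<omega>)) - \<alpha> Q)"
        proof -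
          have QM: "Q \<in> M1 M" using Q sub by blast
          have "(INF Y\<in>versions M P X. ereal (integral\<^sup>L Q (\<lambda>\<omega>. - Y \<omega>)) - \<alpha> Q)
            \<le> (SUP Q\<in>M1 M. INF Y\<in>versions M P X. ereal (integral\<^sup>L Q (\<lambda>\<omega>. - Y \<omega>)) - \<alpha> Q)"
            by (rule SUP_upper[OF QM])
          then show ?thesis using eqabs[OF Q] by simp
        qed
      qed
    qed
  qed
  show ?thesis
  proof
    show "\<forall>X\<in>Linf P. rhoP M \<alpha> P X \<ge> rho_tilde M \<alpha> P X \<and> rho_tilde M \<alpha> P X = rho_hat M \<alpha> P X"
      using main by blast
    show "accP M \<alpha> P \<subseteq> acc_hat M \<alpha> P"
    proof
      fix X assume "X \<in> accP M \<alpha> P"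
      then have X: "X \<in> Linf P" and le: "rhoP M \<alpha> P X \<le> 0" by (simp_all add: accP_def)
      from main[OF X] le have "rho_hat M \<alpha> P X \<le> 0" by (metis order_trans)
      with X show "X \<in> acc_hat M \<alpha> P" by (simp add: acc_hat_def)
    qed
  qed
qed

end
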